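(* Fix $\sigma^2>0$. Let $\mathcal S_C\subset\mathbb R$ be a finite constellation that is symmetric ($s\in\mathcal S_C\Rightarrow -s\in\mathcal S_C$), with points used with equal probability and unit average power. For $\delta>0$ let $\phi^{-1}_\delta(\rho)=1$ for $0\le\rho<\frac{\delta}{1+\sigma^2}$ and $\phi^{-1}_\delta(\rho)=\frac{\delta}{\rho}-\sigma^2$ for $\rho\ge\frac{\delta}{1+\sigma^2}$. Let $\psi^{opt}_{\mathcal S_C}(\rho)=\min\{\phi^{-1}_\delta(\rho),\mathrm{mmse}(\mathcal S_C,\rho)\}$ and $$a_{\mathcal S_C}(\delta)=\int_0^\infty\big(\phi^{-1}_\delta(\rho)-\psi^{opt}_{\mathcal S_C}(\rho)\big)\mathrm d\rho,\qquad R_{\mathrm{AC}}(\delta)=C_{\mathrm G}-\frac{a_{\mathcal S_C}(\delta)}{2\delta},$$ where $C_{\mathrm G}=\frac12\ln(1+1/\sigma^2)$. Then $R_{\mathrm{AC}}(\delta)\to C_{\mathrm G}$ as $\delta\to0$.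
   Context: $\mathrm{mmse}(\mathcal S,\rho)$ denotes the minimum mean-squared error of estimating $s$, drawn uniformly from $\mathcal S$, from the observation $\sqrt\rho\,s+w$ with $w\sim\mathcal N(0,1)$ independent of $s$. In the paper's interpretation $\delta\to0$ is taken jointly with the underlying code rate $R_{\mathrm C}=\delta R_{\mathrm{AC}}\to0$, and the decoder transfer curve is assumed to satisfy the matching condition $\psi=\psi^{opt}_{\mathcal S_C}$. *)

theory Defs
  imports "HOL-Probability.Probability"
begin

text \<open>Conditional-mean (MMSE) estimator of s, uniform on the finite set S,
  from y = sqrt rho * s + w with w ~ N(0,1).\<close>
definition cond_mean :: "real set \<Rightarrow> real \<Rightarrow> real \<Rightarrow> real" where
  "cond_mean S \<rho> y =
     (\<Sum>s\<in>S. s * std_normal_density (y - sqrt \<rho> * s)) /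
     (\<Sum>s\<in>S. std_normal_density (y - sqrt \<rho> * s))"

definition mmse :: "real set \<Rightarrow> real \<Rightarrow> real" where
  "mmse S \<rho> = (1 / real (card S)) *
     (\<Sum>s\<in>S. \<integral>w. (s - cond_mean S \<rho> (sqrt \<rho> * s + w))\<^sup>2 * std_normal_density w \<partial>lborel)"

definition phi_inv :: "real \<Rightarrow> real \<Rightarrow> real \<Rightarrow> real" where
  "phi_inv \<sigma>2 \<delta> \<rho> = (if \<rho> < \<delta> / (1 + \<sigma>2) then 1 else \<delta> / \<rho> - \<sigma>2)"

definition psi_opt :: "real set \<Rightarrow> real \<Rightarrow> real \<Rightarrow> real \<Rightarrow> real" where
  "psi_opt S \<sigma>2 \<delta> \<rho> = min (phi_inv \<sigma>2 \<delta> \<rho>) (mmse S \<rho>)"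

definition area_gap :: "real set \<Rightarrow> real \<Rightarrow> real \<Rightarrow> real" where
  "area_gap S \<sigma>2 \<delta> = (LINT \<rho>:{0..}|lborel. phi_inv \<sigma>2 \<delta> \<rho> - psi_opt S \<sigma>2 \<delta> \<rho>)"

definition C_G :: "real \<Rightarrow> real" where
  "C_G \<sigma>2 = ln (1 + 1 / \<sigma>2) / 2"

definition R_AC :: "real set \<Rightarrow> real \<Rightarrow> real \<Rightarrow> real" where
  "R_AC S \<sigma>2 \<delta> = C_G \<sigma>2 - area_gap S \<sigma>2 \<delta> / (2 * \<delta>)"

end

theory Submission imports Defs begin

lemma sum_sym_zero:
  fixes S :: "real set"
  assumes "finite S" "\<And>s. s \<in> S \<Longrightarrow> - s \<in> S"
  shows "(\<Sum>s\<in>S. s) = 0"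
proof -
  have "(\<Sum>s\<in>S. s) = (\<Sum>s\<in>S. - s)"
    by (rule sum.reindex_bij_witness[of _ uminus uminus]) (simp_all add: assms)
  then show ?thesis by (simp add: sum_negf)
qed

lemma cm_bound:
  fixes S :: "real set"
  assumes "finite S" "S \<noteq> {}" "\<And>s. s \<in> S \<Longrightarrow> \<bar>s\<bar> \<le> M"
  shows "\<bar>cond_mean S \<rho> y\<bar> \<le> M"
proof -
  define a where "a s = std_normal_density (y - sqrt \<rho> * s)" for s
  have apos: "a s > 0" for s unfolding a_def by (rule normal_density_pos) simp
  have Dpos: "(\<Sum>s\<in>S. a s) > 0" using assms(1,2) apos by (intro sum_pos) auto
  have "\<bar>\<Sum>s\<in>S. s * a s\<bar> \<le> (\<Sum>s\<in>S. \<bar>s * a s\<bar>)" by (rule sum_abs)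
  also have "\<dots> \<le> (\<Sum>s\<in>S. M * a s)"
  proof (rule sum_mono)
    fix s assume "s \<in> S"
    have "\<bar>s * a s\<bar> = \<bar>s\<bar> * a s" using apos[of s] by (simp add: abs_mult)
    also have "\<dots> \<le> M * a s" using assms(3)[OF \<open>s \<in> S\<close>] apos[of s] by (intro mult_right_mono) auto
    finally show "\<bar>s * a s\<bar> \<le> M * a s" .
  qed
  also have "\<dots> = M * (\<Sum>s\<in>S. a s)" by (rule sum_distrib_left[symmetric])
  finally have N: "\<bar>\<Sum>s\<in>S. s * a s\<bar> \<le> M * (\<Sum>s\<in>S. a s)" .
  have cm: "cond_mean S \<rho> y = (\<Sum>s\<in>S. s * a s) / (\<Sum>s\<in>S. a s)"
    unfolding cond_mean_def a_def by (rule refl)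
  have "\<bar>(\<Sum>s\<in>S. s * a s) / (\<Sum>s\<in>S. a s)\<bar> = \<bar>\<Sum>s\<in>S. s * a s\<bar> / (\<Sum>s\<in>S. a s)"
    using Dpos by (simp add: abs_divide)
  also have "\<dots> \<le> M" using N Dpos by (simp add: pos_divide_le_eq)
  finally show ?thesis unfolding cm .
qed

lemma cm_zero:
  fixes S :: "real set"
  assumes "(\<Sum>s\<in>S. s) = 0"
  shows "cond_mean S 0 y = 0"
proof -
  have "(\<Sum>s\<in>S. s * std_normal_density (y - sqrt 0 * s)) = (\<Sum>s\<in>S. s) * std_normal_density y"
    by (simp add: sum_distrib_right)
  then show ?thesis unfolding cond_mean_def using assms by simp
qed

lemma cont_snd[continuous_intros]:
  "continuous F f \<Longrightarrow> continuous F (\<lambda>x. std_normal_density (f x))"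
  unfolding std_normal_density_def divide_inverse by (intro continuous_intros)

lemma cm_cont:
  fixes S :: "real set"
  assumes "finite S" "S \<noteq> {}"
  shows "isCont (\<lambda>\<rho>. cond_mean S \<rho> (sqrt \<rho> * s + w)) 0"
proof -
  have pos: "(\<Sum>s'\<in>S. std_normal_density (sqrt 0 * s + w - sqrt 0 * s')) \<noteq> 0"
    using assms by (intro less_imp_neq[symmetric] sum_pos normal_density_pos) auto
  show ?thesis unfolding cond_mean_def
    by (intro continuous_intros pos)
qed

lemma int_lim:
  fixes S :: "real set"
  assumes fin: "finite S" and ne: "S \<noteq> {}" and sz: "(\<Sum>s\<in>S. s) = 0"
    and bd: "\<And>s. s \<in> S \<Longrightarrow> \<bar>s\<bar> \<le> M"
  shows "((\<lambda>\<rho>. \<integral>w. (s - cond_mean S \<rho> (sqrt \<rho> * s + w))\<^sup>2 * std_normal_density w \<partial>lborel) \<longlongrightarrow> s\<^sup>2) (at_right 0)"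
proof (rule tendsto_at_right_sequentially[of 0 1, OF zero_less_one])
  fix X :: "nat \<Rightarrow> real" assume X: "X \<longlonglongrightarrow> 0"
  define f where "f w = (s - cond_mean S 0 (sqrt 0 * s + w))\<^sup>2 * std_normal_density w" for w
  have fe: "f w = s\<^sup>2 * std_normal_density w" for w unfolding f_def using cm_zero[OF sz] by simp
  have "(\<lambda>i. \<integral>w. (s - cond_mean S (X i) (sqrt (X i) * s + w))\<^sup>2 * std_normal_density w \<partial>lborel) \<longlonglongrightarrow> integral\<^sup>L lborel f"
  proof (rule integral_dominated_convergence[where w="\<lambda>w. (\<bar>s\<bar> + M)\<^sup>2 * std_normal_density w"])
    show "f \<in> borel_measurable lborel" unfolding fe by measurable
    show "(\<lambda>w. (s - cond_mean S (X i) (sqrt (X i) * s + w))\<^sup>2 * std_normal_density w) \<in> borel_measurable lborel" for i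
      unfolding cond_mean_def by measurable
    show "integrable lborel (\<lambda>w. (\<bar>s\<bar> + M)\<^sup>2 * std_normal_density w)" by simp
    show "AE w in lborel. (\<lambda>i. (s - cond_mean S (X i) (sqrt (X i) * s + w))\<^sup>2 * std_normal_density w) \<longlonglongrightarrow> f w"
    proof (rule AE_I2)
      fix w
      have "(\<lambda>i. cond_mean S (X i) (sqrt (X i) * s + w)) \<longlonglongrightarrow> cond_mean S 0 (sqrt 0 * s + w)"
        by (rule isCont_tendsto_compose[OF cm_cont[OF fin ne] X])
      then show "(\<lambda>i. (s - cond_mean S (X i) (sqrt (X i) * s + w))\<^sup>2 * std_normal_density w) \<longlonglongrightarrow> f w"
        unfolding f_def by (intro tendsto_intros)
    qed
    show "AE w in lborel. norm ((s - cond_mean S (X i) (sqrt (X i) * s + w))\<^sup>2 * std_normal_density w) \<le> (\<bar>s\<bar> + M)\<^sup>2 * std_normal_density w" for i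
    proof (rule AE_I2)
      fix w
      have c: "\<bar>cond_mean S (X i) (sqrt (X i) * s + w)\<bar> \<le> M" by (rule cm_bound[OF fin ne bd])
      have "\<bar>s - cond_mean S (X i) (sqrt (X i) * s + w)\<bar> \<le> \<bar>s\<bar> + M" using c by linarith
      then have "(s - cond_mean S (X i) (sqrt (X i) * s + w))\<^sup>2 \<le> (\<bar>s\<bar> + M)\<^sup>2"
      proof -
        have "\<bar>s - cond_mean S (X i) (sqrt (X i) * s + w)\<bar>\<^sup>2 \<le> (\<bar>s\<bar> + M)\<^sup>2"
          by (rule power_mono[OF \<open>\<bar>s - cond_mean S (X i) (sqrt (X i) * s + w)\<bar> \<le> \<bar>s\<bar> + M\<close>]) simp
        then show ?thesis by simp
      qed
      then show "norm ((s - cond_mean S (X i) (sqrt (X i) * s + w))\<^sup>2 * std_normal_density w) \<le> (\<bar>s\<bar> + M)\<^sup>2 * std_normal_density w"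
        by (simp add: mult_right_mono)
    qed
  qed
  moreover have "integral\<^sup>L lborel f = s\<^sup>2" unfolding fe by simp
  ultimately show "(\<lambda>i. \<integral>w. (s - cond_mean S (X i) (sqrt (X i) * s + w))\<^sup>2 * std_normal_density w \<partial>lborel) \<longlonglongrightarrow> s\<^sup>2" by simp
qed

lemma mmse_lim:
  fixes S :: "real set"
  assumes fin: "finite S" and ne: "S \<noteq> {}" and sym: "\<And>s. s \<in> S \<Longrightarrow> - s \<in> S"
    and pw: "(\<Sum>s\<in>S. s\<^sup>2) / real (card S) = 1"
  shows "(mmse S \<longlongrightarrow> 1) (at_right 0)"
proof -
  define M where "M = (\<Sum>s\<in>S. \<bar>s\<bar>)"
  have bd: "\<bar>s\<bar> \<le> M" if "s \<in> S" for s
    unfolding M_def by (rule member_le_sum[OF that]) (auto simp: fin)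
  have sz: "(\<Sum>s\<in>S. s) = 0" by (rule sum_sym_zero[OF fin sym])
  have "((\<lambda>\<rho>. (1 / real (card S)) * (\<Sum>s\<in>S. \<integral>w. (s - cond_mean S \<rho> (sqrt \<rho> * s + w))\<^sup>2 * std_normal_density w \<partial>lborel))
     \<longlongrightarrow> (1 / real (card S)) * (\<Sum>s\<in>S. s\<^sup>2)) (at_right 0)"
    by (intro tendsto_intros int_lim[OF fin ne sz bd])
  then show ?thesis using pw unfolding mmse_def by simp
qed

lemma mmse_zero:
  fixes S :: "real set"
  assumes fin: "finite S" and sym: "\<And>s. s \<in> S \<Longrightarrow> - s \<in> S"
    and pw: "(\<Sum>s\<in>S. s\<^sup>2) / real (card S) = 1"
  shows "mmse S 0 = 1"
proof -
  have sz: "(\<Sum>s\<in>S. s) = 0" by (rule sum_sym_zero[OF fin sym])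
  show ?thesis using pw unfolding mmse_def by (simp add: cm_zero[OF sz])
qed

lemma mmse_nonneg: "mmse S \<rho> \<ge> 0"
  unfolding mmse_def by (intro mult_nonneg_nonneg sum_nonneg integral_nonneg) auto

lemma gap_pointwise:
  assumes s: "\<sigma>2 > 0" and d: "\<delta> > 0" and r: "\<rho> \<ge> 0"
    and m0: "mmse S \<rho> \<ge> 0"
    and mb: "\<rho> < \<delta> / \<sigma>2 \<Longrightarrow> mmse S \<rho> \<ge> 1 - \<epsilon>" and e: "\<epsilon> \<ge> 0"
  shows "0 \<le> phi_inv \<sigma>2 \<delta> \<rho> - psi_opt S \<sigma>2 \<delta> \<rho>"
    and "phi_inv \<sigma>2 \<delta> \<rho> - psi_opt S \<sigma>2 \<delta> \<rho> \<le> \<epsilon> * indicator {0..\<delta>/\<sigma>2} \<rho>"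
proof -
  show "0 \<le> phi_inv \<sigma>2 \<delta> \<rho> - psi_opt S \<sigma>2 \<delta> \<rho>" unfolding psi_opt_def by simp
  have lt: "\<delta> / (1 + \<sigma>2) < \<delta> / \<sigma>2" using s d by (simp add: frac_less2)
  have p1: "phi_inv \<sigma>2 \<delta> \<rho> \<le> 1"
  proof (cases "\<rho> < \<delta> / (1 + \<sigma>2)")
    case False
    then have "\<delta> \<le> \<rho> * (1 + \<sigma>2)" using s by (simp add: field_simps)
    moreover have "\<rho> > 0" using False d s by (smt (verit) divide_pos_pos)
    ultimately have "\<delta> / \<rho> \<le> 1 + \<sigma>2" by (simp add: divide_le_eq mult.commute)
    then show ?thesis using False unfolding phi_inv_def by simp
  qed (simp add: phi_inv_def)
  show "phi_inv \<sigma>2 \<delta> \<rho> - psi_opt S \<sigma>2 \<delta> \<rho> \<le> \<epsilon> * indicator {0..\<delta>/\<sigma>2} \<rho>"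
  proof (cases "\<rho> < \<delta> / \<sigma>2")
    case True
    then have "\<rho> \<in> {0..\<delta>/\<sigma>2}" using r by simp
    then show ?thesis using mb[OF True] p1 e unfolding psi_opt_def by (simp add: indicator_def)
  next
    case False
    then have "\<not> \<rho> < \<delta> / (1 + \<sigma>2)" using lt by simp
    moreover have "\<rho> > 0" using False d s by (smt (verit) divide_pos_pos)
    moreover have "\<delta> \<le> \<rho> * \<sigma>2" using False s by (simp add: not_less pos_divide_le_eq)
    then have "\<delta> / \<rho> \<le> \<sigma>2" using \<open>\<rho> > 0\<close> by (simp add: pos_divide_le_eq mult.commute)
    ultimately have "phi_inv \<sigma>2 \<delta> \<rho> \<le> 0" unfolding phi_inv_def by simp
    then have "phi_inv \<sigma>2 \<delta> \<rho> - psi_opt S \<sigma>2 \<delta> \<rho> = 0" using m0 unfolding psi_opt_def by simp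
    then show ?thesis using e by simp
  qed
qed

lemma gap_bound:
  assumes s: "\<sigma>2 > 0" and d: "\<delta> > 0" and e: "\<epsilon> \<ge> 0"
    and mb: "\<And>\<rho>. 0 \<le> \<rho> \<Longrightarrow> \<rho> < \<delta> / \<sigma>2 \<Longrightarrow> mmse S \<rho> \<ge> 1 - \<epsilon>"
  shows "0 \<le> area_gap S \<sigma>2 \<delta>" and "area_gap S \<sigma>2 \<delta> \<le> \<epsilon> * (\<delta> / \<sigma>2)"
proof -
  define h where "h \<rho> = indicator {0..} \<rho> * (phi_inv \<sigma>2 \<delta> \<rho> - psi_opt S \<sigma>2 \<delta> \<rho>)" for \<rho> :: real
  have ag: "area_gap S \<sigma>2 \<delta> = integral\<^sup>L lborel h"
    unfolding area_gap_def set_lebesgue_integral_def h_def by simp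
  have h0: "0 \<le> h \<rho>" for \<rho>
    using gap_pointwise(1)[OF s d _ mmse_nonneg mb e] unfolding h_def by (simp add: indicator_def)
  have h1: "h \<rho> \<le> \<epsilon> * indicator {0..\<delta>/\<sigma>2} \<rho>" for \<rho>
  proof (cases "\<rho> \<ge> 0")
    case True
    then show ?thesis using gap_pointwise(2)[OF s d True mmse_nonneg mb[OF True] e] unfolding h_def by simp
  next
    case False
    then show ?thesis by (simp add: h_def indicator_def)
  qed
  show "0 \<le> area_gap S \<sigma>2 \<delta>" unfolding ag by (rule integral_nonneg_AE) (simp add: h0)
  have ib: "integrable lborel (\<lambda>\<rho>. \<epsilon> * indicator {0..\<delta>/\<sigma>2} \<rho>)"
    using s d by (intro integrable_mult_right integrable_real_indicator) auto
  have vb: "integral\<^sup>L lborel (\<lambda>\<rho>. \<epsilon> * indicator {0..\<delta>/\<sigma>2} \<rho>) = \<epsilon> * (\<delta> / \<sigma>2)"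
    using s d by simp
  show "area_gap S \<sigma>2 \<delta> \<le> \<epsilon> * (\<delta> / \<sigma>2)"
  proof (cases "integrable lborel h")
    case True
    have "integral\<^sup>L lborel h \<le> integral\<^sup>L lborel (\<lambda>\<rho>. \<epsilon> * indicator {0..\<delta>/\<sigma>2} \<rho>)"
      by (rule integral_mono[OF True ib h1])
    then show ?thesis using ag vb by simp
  next
    case False
    then show ?thesis using ag e s d by (simp add: not_integrable_integral_eq)
  qed
qed

theorem theorem2:
  fixes S :: "real set" and \<sigma>2 :: real
  assumes "\<sigma>2 > 0"
    and "finite S" and "S \<noteq> {}"
    and "\<And>s. s \<in> S \<Longrightarrow> - s \<in> S"
    and "(\<Sum>s\<in>S. s\<^sup>2) / real (card S) = 1"
  shows "((\<lambda>\<delta>. R_AC S \<sigma>2 \<delta>) \<longlongrightarrow> C_G \<sigma>2) (at_right 0)"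
proof -
  note s = assms(1)
  have ml: "(mmse S \<longlongrightarrow> 1) (at_right 0)" by (rule mmse_lim[OF assms(2-5)])
  have mz: "mmse S 0 = 1" by (rule mmse_zero[OF assms(2,4,5)])
  have "((\<lambda>\<delta>. area_gap S \<sigma>2 \<delta> / (2 * \<delta>)) \<longlongrightarrow> 0) (at_right 0)"
    unfolding tendsto_iff
  proof (intro allI impI)
    fix e :: real assume e: "e > 0"
    have "eventually (\<lambda>\<rho>. dist (mmse S \<rho>) 1 < e * \<sigma>2) (at_right 0)"
      using ml e s unfolding tendsto_iff by simp
    then obtain b where b: "b > 0" and bb: "\<And>y. y > 0 \<Longrightarrow> y < b \<Longrightarrow> \<bar>mmse S y - 1\<bar> < e * \<sigma>2"
      unfolding eventually_at_right_field dist_real_def by auto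
    show "eventually (\<lambda>\<delta>. dist (area_gap S \<sigma>2 \<delta> / (2 * \<delta>)) 0 < e) (at_right 0)"
      unfolding eventually_at_right_field
    proof (intro exI[of _ "b * \<sigma>2"] conjI allI impI)
      show "0 < b * \<sigma>2" using b s by simp
      fix \<delta> :: real assume d: "0 < \<delta>" "\<delta> < b * \<sigma>2"
      have mb: "mmse S \<rho> \<ge> 1 - e * \<sigma>2" if "0 \<le> \<rho>" "\<rho> < \<delta> / \<sigma>2" for \<rho>
      proof (cases "\<rho> = 0")
        case True then show ?thesis using mz e s by simp
      next
        case False
        have "\<delta> / \<sigma>2 < b" using d s by (simp add: divide_less_eq)
        then show ?thesis using bb[of \<rho>] that False by fastforce
      qed
      have es: "e * \<sigma>2 \<ge> 0" using e s by simp
      note g = gap_bound[OF s d(1) es mb]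
      have "e * \<sigma>2 * (\<delta> / \<sigma>2) = e * \<delta>" using s by simp
      then have "area_gap S \<sigma>2 \<delta> \<le> e * \<delta>" using g(2) by simp
      then have "area_gap S \<sigma>2 \<delta> / (2 * \<delta>) \<le> e / 2" using d(1) by (simp add: divide_le_eq)
      moreover have "area_gap S \<sigma>2 \<delta> / (2 * \<delta>) \<ge> 0" using g(1) d(1) by simp
      ultimately show "dist (area_gap S \<sigma>2 \<delta> / (2 * \<delta>)) 0 < e" using e by simp
    qed
  qed
  then have "((\<lambda>\<delta>. C_G \<sigma>2 - area_gap S \<sigma>2 \<delta> / (2 * \<delta>)) \<longlongrightarrow> C_G \<sigma>2 - 0) (at_right 0)"
    by (intro tendsto_intros)
  then show ?thesis unfolding R_AC_def by simp
qed

end
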